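(* In a hierarchical tensor factorization with mode tree $\mathcal T$ and end tensor $\mathcal W_H$, let $\nu\in\mathrm{int}(\mathcal T)$ and $r\in[R_\nu]$, and let $\overline{\mathcal W}_H^{(\nu,r)}$ be the end tensor obtained by setting the $r$'th row of $W^{(\nu)}$ and the $r$'th columns of $W^{(\nu_c)}$, $\nu_c\in C(\nu)$, to zero (all other entries unchanged). Then $$\|\mathcal W_H-\overline{\mathcal W}_H^{(\nu,r)}\|\le\sigma_{\nu,r}\cdot\prod_{\nu'\in\mathcal T\setminus(\{\nu\}\cup C(\nu))}\|W^{(\nu')}\|.$$
   Context: Fix $N\in\mathbb N$, $D_1,\dots,D_N\in\mathbb N$; $[K]:=\{1,\dots,K\}$; norms are Frobenius norms; $\otimes$ the tensor product. A mode tree $\mathcal T$ over $[N]$ is a rooted tree whose nodes are labeled by subsets of $[N]$, with exactly $N$ leaves labeled $\{1\},\dots,\{N\}$, and where each interior node's label is the union of its children's labels; nodes are identified with labels, root $[N]$, $\mathrm{int}(\mathcal T)$ interior nodes, $Pa(\nu)$ parent, $C(\nu)$ children (fixed order). A hierarchical tensor factorization has $R_\nu\in\mathbb N$ ($\nu\in\mathrm{int}(\mathcal T)$), $R_{Pa([N])}:=1$, $R_{\{n\}}:=D_n$, weight matrices $W^{(\nu)}\in\mathbb R^{R_\nu\times R_{Pa(\nu)}}$. Intermediate tensors: $\mathcal W^{(\{n\},r)}:=W^{(\{n\})}_{:,r}$; for $\nu\in\mathrm{int}(\mathcal T)\setminus\{[N]\}$ (leaves to root), $r\in[R_{Pa(\nu)}]$: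 $\mathcal W^{(\nu,r)}:=\pi_\nu\big(\sum_{r'=1}^{R_\nu}W^{(\nu)}_{r',r}\bigotimes_{\nu_c\in C(\nu)}\mathcal W^{(\nu_c,r')}\big)$; end tensor $\mathcal W_H:=\pi_{[N]}\big(\sum_{r'=1}^{R_{[N]}}W^{([N])}_{r',1}\bigotimes_{\nu_c\in C([N])}\mathcal W^{(\nu_c,r')}\big)$, where $\pi_\nu$ permutes modes (ordered by children, each child's elements ascending) into ascending order of the elements of $\nu$. $\sigma_{\nu,r}:=\|W^{(\nu)}_{r,:}\|\prod_{\nu_c\in C(\nu)}\|W^{(\nu_c)}_{:,r}\|$ is the norm of the $(\nu,r)$'th local component. *)

theory Defs
  imports Complex_Main "HOL-Library.FuncSet"
begin

text \<open>Since nodes are identified with their labels, a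
  mode tree is the laminar family of its node labels: it contains [N] and all singletons
  {n}, every label is a nonempty subset of [N], and any two labels are nested or
  disjoint.  Children of a node are the maximal proper sub-labels, the parent is the
  minimal proper super-label; leaves are exactly the singleton labels.\<close>

definition mode_tree :: "nat \<Rightarrow> nat set set \<Rightarrow> bool" where
  "mode_tree N T \<longleftrightarrow>
     {1..N} \<in> T \<and> (\<forall>n\<in>{1..N}. {n} \<in> T) \<and>
     (\<forall>\<nu>\<in>T. \<nu> \<noteq> {} \<and> \<nu> \<subseteq> {1..N}) \<and>
     (\<forall>\<nu>\<in>T. \<forall>\<mu>\<in>T. \<nu> \<subseteq> \<mu> \<or> \<mu> \<subseteq> \<nu> \<or> \<nu> \<inter> \<mu> = {})"

definition children :: "nat set set \<Rightarrow> nat set \<Rightarrow> nat set set" where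
  "children T \<nu> = {c\<in>T. c \<subset> \<nu> \<and> \<not> (\<exists>\<mu>\<in>T. c \<subset> \<mu> \<and> \<mu> \<subset> \<nu>)}"

definition parent :: "nat set set \<Rightarrow> nat set \<Rightarrow> nat set" where
  "parent T \<nu> = (THE \<mu>. \<mu> \<in> T \<and> \<nu> \<subset> \<mu> \<and> (\<forall>\<mu>'\<in>T. \<nu> \<subset> \<mu>' \<longrightarrow> \<mu> \<subseteq> \<mu>'))"

definition interior :: "nat set set \<Rightarrow> nat set \<Rightarrow> bool" where
  "interior T \<nu> \<longleftrightarrow> \<nu> \<in> T \<and> \<not> is_singleton \<nu>"

text \<open>Dimensions of the weight matrices (indices are 0-based: rows 0..<rows, columns
  0..<cols).\<close>

definition rows :: "(nat \<Rightarrow> nat) \<Rightarrow> (nat set \<Rightarrow> nat) \<Rightarrow> nat set \<Rightarrow> nat" where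
  "rows D R \<nu> = (if is_singleton \<nu> then D (the_elem \<nu>) else R \<nu>)"

definition cols :: "nat \<Rightarrow> nat set set \<Rightarrow> (nat \<Rightarrow> nat) \<Rightarrow> (nat set \<Rightarrow> nat) \<Rightarrow> nat set \<Rightarrow> nat" where
  "cols N T D R \<nu> = (if \<nu> = {1..N} then 1 else rows D R (parent T \<nu>))"

text \<open>Tensors are represented by their entries as functions of a multi-index
  i :: nat \<Rightarrow> nat, where i n is the index of mode n.  The intermediate tensor of (\<nu>,r)
  only depends on i n for n \<in> \<nu>; the tensor product over children (which have
  disjoint mode sets) is the pointwise product, and the mode permutation \<pi>_\<nu> is
  implicit because modes are addressed by their labels.  The recursion is driven by a
  fuel argument (card \<nu> suffices).\<close>

fun ht :: "nat \<Rightarrow> nat set set \<Rightarrow> (nat set \<Rightarrow> nat) \<Rightarrow> (nat set \<Rightarrow> nat \<Rightarrow> nat \<Rightarrow> real)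
             \<Rightarrow> nat set \<Rightarrow> nat \<Rightarrow> (nat \<Rightarrow> nat) \<Rightarrow> real" where
  "ht 0 T R W \<nu> r i = 0"
| "ht (Suc k) T R W \<nu> r i =
     (if is_singleton \<nu> then W \<nu> (i (the_elem \<nu>)) r
      else (\<Sum>r'<R \<nu>. W \<nu> r' r * (\<Prod>c\<in>children T \<nu>. ht k T R W c r' i)))"

definition inter_tensor :: "nat set set \<Rightarrow> (nat set \<Rightarrow> nat) \<Rightarrow> (nat set \<Rightarrow> nat \<Rightarrow> nat \<Rightarrow> real)
             \<Rightarrow> nat set \<Rightarrow> nat \<Rightarrow> (nat \<Rightarrow> nat) \<Rightarrow> real" where
  "inter_tensor T R W \<nu> r = ht (card \<nu>) T R W \<nu> r"

definition end_tensor :: "nat \<Rightarrow> nat set set \<Rightarrow> (nat set \<Rightarrow> nat) \<Rightarrow> (nat set \<Rightarrow> nat \<Rightarrow> nat \<Rightarrow> real)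
             \<Rightarrow> (nat \<Rightarrow> nat) \<Rightarrow> real" where
  "end_tensor N T R W = inter_tensor T R W {1..N} 0"

definition tensor_norm :: "nat \<Rightarrow> (nat \<Rightarrow> nat) \<Rightarrow> ((nat \<Rightarrow> nat) \<Rightarrow> real) \<Rightarrow> real" where
  "tensor_norm N D X = sqrt (\<Sum>i\<in>PiE {1..N} (\<lambda>n. {..<D n}). (X i)\<^sup>2)"

definition mat_norm :: "nat \<Rightarrow> nat set set \<Rightarrow> (nat \<Rightarrow> nat) \<Rightarrow> (nat set \<Rightarrow> nat)
             \<Rightarrow> (nat set \<Rightarrow> nat \<Rightarrow> nat \<Rightarrow> real) \<Rightarrow> nat set \<Rightarrow> real" where
  "mat_norm N T D R W \<nu> =
     sqrt (\<Sum>a<rows D R \<nu>. \<Sum>b<cols N T D R \<nu>. (W \<nu> a b)\<^sup>2)"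

definition row_norm :: "nat \<Rightarrow> nat set set \<Rightarrow> (nat \<Rightarrow> nat) \<Rightarrow> (nat set \<Rightarrow> nat)
             \<Rightarrow> (nat set \<Rightarrow> nat \<Rightarrow> nat \<Rightarrow> real) \<Rightarrow> nat set \<Rightarrow> nat \<Rightarrow> real" where
  "row_norm N T D R W \<nu> a = sqrt (\<Sum>b<cols N T D R \<nu>. (W \<nu> a b)\<^sup>2)"

definition col_norm :: "(nat \<Rightarrow> nat) \<Rightarrow> (nat set \<Rightarrow> nat)
             \<Rightarrow> (nat set \<Rightarrow> nat \<Rightarrow> nat \<Rightarrow> real) \<Rightarrow> nat set \<Rightarrow> nat \<Rightarrow> real" where
  "col_norm D R W \<nu> b = sqrt (\<Sum>a<rows D R \<nu>. (W \<nu> a b)\<^sup>2)"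

definition local_norm :: "nat \<Rightarrow> nat set set \<Rightarrow> (nat \<Rightarrow> nat) \<Rightarrow> (nat set \<Rightarrow> nat)
             \<Rightarrow> (nat set \<Rightarrow> nat \<Rightarrow> nat \<Rightarrow> real) \<Rightarrow> nat set \<Rightarrow> nat \<Rightarrow> real" where
  "local_norm N T D R W \<nu> r =
     row_norm N T D R W \<nu> r * (\<Prod>c\<in>children T \<nu>. col_norm D R W c r)"

definition zero_component :: "nat set set \<Rightarrow> (nat set \<Rightarrow> nat \<Rightarrow> nat \<Rightarrow> real) \<Rightarrow> nat set \<Rightarrow> nat
             \<Rightarrow> (nat set \<Rightarrow> nat \<Rightarrow> nat \<Rightarrow> real)" where
  "zero_component T W \<nu> r = (\<lambda>\<mu> a b.
     if (\<mu> = \<nu> \<and> a = r) \<or> (\<mu> \<in> children T \<nu> \<and> b = r) then 0 else W \<mu> a b)"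

end

theory Submission
  imports Defs "HOL-Analysis.Convex"
begin

lemma mt_elem:
  assumes "mode_tree N T" "\<mu> \<in> T"
  shows "\<mu> \<noteq> {}" "\<mu> \<subseteq> {1..N}" "finite \<mu>"
proof -
  show "\<mu> \<noteq> {}" "\<mu> \<subseteq> {1..N}" using assms unfolding mode_tree_def by auto
  then show "finite \<mu>" using finite_subset by blast
qed

lemma mt_finite: assumes "mode_tree N T" shows "finite T"
proof -
  have "T \<subseteq> Pow {1..N}" using assms unfolding mode_tree_def by auto
  then show ?thesis by (rule finite_subset) simp
qed

lemma mt_lam:
  assumes "mode_tree N T" "\<mu> \<in> T" "\<rho> \<in> T"
  shows "\<mu> \<subseteq> \<rho> \<or> \<rho> \<subseteq> \<mu> \<or> \<mu> \<inter> \<rho> = {}"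
  using assms unfolding mode_tree_def by auto

lemma ch_in: "c \<in> children T \<mu> \<Longrightarrow> c \<in> T \<and> c \<subset> \<mu>"
  unfolding children_def by auto

lemma ch_max: "c \<in> children T \<mu> \<Longrightarrow> \<rho> \<in> T \<Longrightarrow> c \<subset> \<rho> \<Longrightarrow> \<rho> \<subset> \<mu> \<Longrightarrow> False"
  unfolding children_def by auto

lemma ch_disj:
  assumes "mode_tree N T" "c1 \<in> children T \<mu>" "c2 \<in> children T \<mu>" "c1 \<noteq> c2"
  shows "c1 \<inter> c2 = {}"
proof -
  have "c1 \<in> T" "c2 \<in> T" "c1 \<subset> \<mu>" "c2 \<subset> \<mu>" using assms ch_in by auto
  moreover have "\<not> c1 \<subset> c2" using ch_max[OF assms(2)] \<open>c2 \<in> T\<close> \<open>c2 \<subset> \<mu>\<close> by blast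
  moreover have "\<not> c2 \<subset> c1" using ch_max[OF assms(3)] \<open>c1 \<in> T\<close> \<open>c1 \<subset> \<mu>\<close> by blast
  ultimately show ?thesis using mt_lam[OF assms(1), of c1 c2] assms(4) by blast
qed

lemma ch_below:
  assumes "mode_tree N T" "\<sigma> \<in> T" "\<sigma> \<subset> \<mu>"
  shows "\<exists>c\<in>children T \<mu>. \<sigma> \<subseteq> c"
proof -
  let ?P = "\<lambda>\<rho>. \<rho> \<in> T \<and> \<sigma> \<subseteq> \<rho> \<and> \<rho> \<subset> \<mu>"
  have b: "\<forall>y. ?P y \<longrightarrow> card y < Suc N"
  proof (intro allI impI)
    fix y assume "?P y"
    then have "y \<subseteq> {1..N}" using mt_elem[OF assms(1)] by blast
    then have "card y \<le> card {1..N}" by (intro card_mono) auto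
    then show "card y < Suc N" by simp
  qed
  obtain \<rho> where r: "?P \<rho>" "\<forall>y. ?P y \<longrightarrow> card y \<le> card \<rho>"
    using ex_has_greatest_nat[of ?P \<sigma> card "Suc N", OF _ b] assms by auto
  have "\<not> (\<exists>\<rho>'\<in>T. \<rho> \<subset> \<rho>' \<and> \<rho>' \<subset> \<mu>)"
  proof
    assume "\<exists>\<rho>'\<in>T. \<rho> \<subset> \<rho>' \<and> \<rho>' \<subset> \<mu>"
    then obtain \<rho>' where h: "\<rho>' \<in> T" "\<rho> \<subset> \<rho>'" "\<rho>' \<subset> \<mu>" by blast
    then have "?P \<rho>'" using r by auto
    moreover have "finite \<rho>'" using mt_elem[OF assms(1) h(1)] by blast
    ultimately have "card \<rho> < card \<rho>'" using h(2) by (simp add: psubset_card_mono)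
    moreover have "card \<rho>' \<le> card \<rho>" using r(2) \<open>?P \<rho>'\<close> by blast
    ultimately show False by simp
  qed
  then have "\<rho> \<in> children T \<mu>" using r unfolding children_def by blast
  then show ?thesis using r by blast
qed

lemma ch_union:
  assumes "mode_tree N T" "\<mu> \<in> T" "\<not> is_singleton \<mu>"
  shows "\<Union>(children T \<mu>) = \<mu>"
proof
  show "\<Union>(children T \<mu>) \<subseteq> \<mu>" using ch_in by blast
next
  show "\<mu> \<subseteq> \<Union>(children T \<mu>)"
  proof
    fix x assume x: "x \<in> \<mu>"
    have "x \<in> {1..N}" using x mt_elem[OF assms(1,2)] by auto
    then have "{x} \<in> T" using assms(1) unfolding mode_tree_def by auto
    moreover have "{x} \<subset> \<mu>" using x assms(3) by (auto simp: is_singleton_def)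
    ultimately obtain c where "c \<in> children T \<mu>" "{x} \<subseteq> c" using ch_below[OF assms(1)] by metis
    then show "x \<in> \<Union>(children T \<mu>)" by auto
  qed
qed

lemma ch_finite: "mode_tree N T \<Longrightarrow> finite (children T \<mu>)"
proof -
  assume "mode_tree N T"
  moreover have "children T \<mu> \<subseteq> T" unfolding children_def by blast
  ultimately show ?thesis using mt_finite finite_subset by blast
qed

lemma ch_nonempty:
  assumes "mode_tree N T" "\<mu> \<in> T" "\<not> is_singleton \<mu>"
  shows "children T \<mu> \<noteq> {}"
  using ch_union[OF assms] mt_elem[OF assms(1,2)] by auto

lemma parent_ch:
  assumes "mode_tree N T" "\<mu> \<in> T" "c \<in> children T \<mu>"
  shows "parent T c = \<mu>"
proof -
  have c: "c \<in> T" "c \<subset> \<mu>" using ch_in[OF assms(3)] by auto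
  have cne: "c \<noteq> {}" using mt_elem[OF assms(1) c(1)] by simp
  have up: "\<mu> \<subseteq> \<mu>'" if h: "\<mu>' \<in> T" "c \<subset> \<mu>'" for \<mu>'
  proof (rule ccontr)
    assume n: "\<not> \<mu> \<subseteq> \<mu>'"
    have "\<mu>' \<subseteq> \<mu> \<or> \<mu> \<inter> \<mu>' = {}" using mt_lam[OF assms(1,2) h(1)] n by blast
    then show False
    proof
      assume "\<mu>' \<subseteq> \<mu>"
      then have "\<mu>' \<subset> \<mu>" using n by auto
      then show False using ch_max[OF assms(3) h(1) h(2)] by simp
    next
      assume "\<mu> \<inter> \<mu>' = {}"
      then show False using c(2) h(2) cne by auto
    qed
  qed
  show ?thesis unfolding parent_def
  proof (rule the_equality)
    show "\<mu> \<in> T \<and> c \<subset> \<mu> \<and> (\<forall>\<mu>'\<in>T. c \<subset> \<mu>' \<longrightarrow> \<mu> \<subseteq> \<mu>')"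
      using assms(2) c(2) up by simp
  next
    fix \<rho> assume r: "\<rho> \<in> T \<and> c \<subset> \<rho> \<and> (\<forall>\<mu>'\<in>T. c \<subset> \<mu>' \<longrightarrow> \<rho> \<subseteq> \<mu>')"
    then have "\<rho> \<subseteq> \<mu>" using assms(2) c(2) by simp
    moreover have "\<mu> \<subseteq> \<rho>" using up r by simp
    ultimately show "\<rho> = \<mu>" by simp
  qed
qed

lemma cols_ch:
  assumes "mode_tree N T" "\<mu> \<in> T" "\<not> is_singleton \<mu>" "c \<in> children T \<mu>"
  shows "cols N T D R c = R \<mu>"
proof -
  have "c \<noteq> {1..N}" using ch_in[OF assms(4)] mt_elem[OF assms(1,2)] by auto
  then show ?thesis using parent_ch[OF assms(1,2,4)] assms(3) by (simp add: cols_def rows_def)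
qed

definition subt :: "nat set set \<Rightarrow> nat set \<Rightarrow> nat set set" where
  "subt T \<mu> = {\<sigma>\<in>T. \<sigma> \<subseteq> \<mu>}"

lemma subt_decomp:
  assumes "mode_tree N T" "\<mu> \<in> T" "\<not> is_singleton \<mu>"
  shows "subt T \<mu> - {\<mu>} = (\<Union>c\<in>children T \<mu>. subt T c)"
proof
  show "subt T \<mu> - {\<mu>} \<subseteq> (\<Union>c\<in>children T \<mu>. subt T c)"
  proof
    fix x assume "x \<in> subt T \<mu> - {\<mu>}"
    then have x: "x \<in> T" "x \<subset> \<mu>" unfolding subt_def by auto
    obtain c where "c \<in> children T \<mu>" "x \<subseteq> c" using ch_below[OF assms(1) x] by blast
    then show "x \<in> (\<Union>c\<in>children T \<mu>. subt T c)" using x unfolding subt_def by auto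
  qed
  show "(\<Union>c\<in>children T \<mu>. subt T c) \<subseteq> subt T \<mu> - {\<mu>}"
  proof
    fix x assume "x \<in> (\<Union>c\<in>children T \<mu>. subt T c)"
    then obtain c where c: "c \<in> children T \<mu>" "x \<in> T" "x \<subseteq> c" unfolding subt_def by auto
    then have "c \<subset> \<mu>" using ch_in by auto
    then show "x \<in> subt T \<mu> - {\<mu>}" using c unfolding subt_def by auto
  qed
qed

lemma subt_disj:
  assumes "mode_tree N T" "c1 \<in> children T \<mu>" "c2 \<in> children T \<mu>" "c1 \<noteq> c2"
  shows "subt T c1 \<inter> subt T c2 = {}"
proof (rule ccontr)
  assume "subt T c1 \<inter> subt T c2 \<noteq> {}"
  then obtain x where x: "x \<in> T" "x \<subseteq> c1" "x \<subseteq> c2" unfolding subt_def by auto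
  then have "x \<noteq> {}" using mt_elem[OF assms(1)] by auto
  moreover have "c1 \<inter> c2 = {}" using ch_disj[OF assms] .
  ultimately show False using x by auto
qed

lemma subt_leaf:
  assumes "mode_tree N T" "\<mu> \<in> T" "is_singleton \<mu>"
  shows "subt T \<mu> - {\<mu>} = {}"
proof -
  obtain x where x: "\<mu> = {x}" using assms(3) unfolding is_singleton_def by auto
  have "\<sigma> = \<mu>" if "\<sigma> \<in> T" "\<sigma> \<subseteq> \<mu>" for \<sigma>
  proof -
    have "\<sigma> \<noteq> {}" using mt_elem[OF assms(1) that(1)] by auto
    then show ?thesis using that(2) x by auto
  qed
  then show ?thesis unfolding subt_def by auto
qed

lemma subt_finite: "mode_tree N T \<Longrightarrow> finite (subt T \<mu>)"
  using mt_finite unfolding subt_def by auto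

lemma ht_loc:
  "(\<forall>n\<in>\<sigma>. i n = i' n) \<Longrightarrow> ht k T R V \<sigma> b i = ht k T R V \<sigma> b i'"
proof (induction k arbitrary: \<sigma> b)
  case 0 then show ?case by simp
next
  case (Suc k)
  show ?case
  proof (cases "is_singleton \<sigma>")
    case True
    then have "the_elem \<sigma> \<in> \<sigma>" by (auto simp: is_singleton_def)
    then show ?thesis using True Suc.prems by simp
  next
    case False
    have "\<And>c a. c \<in> children T \<sigma> \<Longrightarrow> ht k T R V c a i = ht k T R V c a i'"
      using Suc.IH Suc.prems ch_in by blast
    then show ?thesis using False by simp
  qed
qed

lemma ht_cong1:
  "\<sigma> \<in> T \<Longrightarrow> (\<forall>\<rho>\<in>T. \<rho> \<subseteq> \<sigma> \<longrightarrow> V \<rho> = V' \<rho>) \<Longrightarrow> ht k T R V \<sigma> b i = ht k T R V' \<sigma> b i"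
proof (induction k arbitrary: \<sigma> b)
  case 0 then show ?case by simp
next
  case (Suc k)
  have "\<And>c a. c \<in> children T \<sigma> \<Longrightarrow> ht k T R V c a i = ht k T R V' c a i"
  proof -
    fix c a assume c: "c \<in> children T \<sigma>"
    then have "c \<in> T" "c \<subseteq> \<sigma>" using ch_in by auto
    then show "ht k T R V c a i = ht k T R V' c a i" using Suc by (meson order_trans)
  qed
  moreover have "V \<sigma> = V' \<sigma>" using Suc.prems by blast
  ultimately show ?case by simp
qed

lemma ht_cong2:
  "\<sigma> \<in> T \<Longrightarrow> (\<forall>a. V \<sigma> a b = V' \<sigma> a b) \<Longrightarrow> (\<forall>\<rho>\<in>T. \<rho> \<subset> \<sigma> \<longrightarrow> V \<rho> = V' \<rho>)
   \<Longrightarrow> ht k T R V \<sigma> b i = ht k T R V' \<sigma> b i"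
proof (cases k)
  case 0 then show ?thesis by simp
next
  case (Suc k')
  assume a: "\<sigma> \<in> T" "\<forall>a. V \<sigma> a b = V' \<sigma> a b" "\<forall>\<rho>\<in>T. \<rho> \<subset> \<sigma> \<longrightarrow> V \<rho> = V' \<rho>"
  have "\<And>c a. c \<in> children T \<sigma> \<Longrightarrow> ht k' T R V c a i = ht k' T R V' c a i"
  proof -
    fix c a assume c: "c \<in> children T \<sigma>"
    then have "c \<in> T" "c \<subset> \<sigma>" using ch_in by auto
    then show "ht k' T R V c a i = ht k' T R V' c a i"
      using a by (intro ht_cong1) auto
  qed
  then show ?thesis using Suc a by simp
qed

lemma PiE_split_sum:
  fixes F :: "('a \<Rightarrow> 'b) \<Rightarrow> real"
  assumes disj: "c0 \<inter> U = {}"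
  shows "(\<Sum>i\<in>PiE (c0 \<union> U) A. F i)
       = (\<Sum>p\<in>PiE c0 A \<times> PiE U A. F (\<lambda>n. if n \<in> c0 then fst p n else snd p n))"
proof (rule sum.reindex_bij_witness[of _ "\<lambda>p n. if n \<in> c0 then fst p n else snd p n"
        "\<lambda>i. (restrict i c0, restrict i U)"])
  fix a assume a: "a \<in> PiE (c0 \<union> U) A"
  show m: "(\<lambda>n. if n \<in> c0 then fst (restrict a c0, restrict a U) n else snd (restrict a c0, restrict a U) n) = a"
  proof
    fix n show "(if n \<in> c0 then fst (restrict a c0, restrict a U) n else snd (restrict a c0, restrict a U) n) = a n"
      using a by (cases "n \<in> c0"; cases "n \<in> U") (auto simp: PiE_def extensional_def)
  qed
  show "(restrict a c0, restrict a U) \<in> PiE c0 A \<times> PiE U A"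
    using a by (auto simp: PiE_iff)
  show "F (\<lambda>n. if n \<in> c0 then fst (restrict a c0, restrict a U) n else snd (restrict a c0, restrict a U) n) = F a"
    using m by simp
next
  fix b assume b: "b \<in> PiE c0 A \<times> PiE U A"
  obtain f h where fh: "b = (f, h)" by (cases b)
  have f: "f \<in> PiE c0 A" and h: "h \<in> PiE U A" using b fh by auto
  have e1: "restrict (\<lambda>n. if n \<in> c0 then f n else h n) c0 = f"
  proof
    fix n show "restrict (\<lambda>n. if n \<in> c0 then f n else h n) c0 n = f n"
      using f by (cases "n \<in> c0") (auto simp: PiE_def extensional_def)
  qed
  have e2: "restrict (\<lambda>n. if n \<in> c0 then f n else h n) U = h"
  proof
    fix n show "restrict (\<lambda>n. if n \<in> c0 then f n else h n) U n = h n"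
      using h disj by (cases "n \<in> U") (auto simp: PiE_def extensional_def)
  qed
  show "(restrict (\<lambda>n. if n \<in> c0 then fst b n else snd b n) c0,
         restrict (\<lambda>n. if n \<in> c0 then fst b n else snd b n) U) = b"
    unfolding fh fst_conv snd_conv by (simp only: e1 e2)
  have "(\<lambda>n. if n \<in> c0 then f n else h n) \<in> PiE (c0 \<union> U) A"
    using f h by (auto simp: PiE_def extensional_def)
  then show "(\<lambda>n. if n \<in> c0 then fst b n else snd b n) \<in> PiE (c0 \<union> U) A"
    unfolding fh fst_conv snd_conv .
qed

lemma sum_PiE_prod_disj:
  fixes g :: "'a set \<Rightarrow> ('a \<Rightarrow> 'b) \<Rightarrow> real"
  assumes "finite C" "\<forall>c\<in>C. finite c" "\<forall>c1\<in>C. \<forall>c2\<in>C. c1 \<noteq> c2 \<longrightarrow> c1 \<inter> c2 = {}"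
    "\<forall>n. finite (A n)"
    "\<forall>c\<in>C. \<forall>i i'. (\<forall>n\<in>c. i n = i' n) \<longrightarrow> g c i = g c i'"
  shows "(\<Sum>i\<in>PiE (\<Union>C) A. \<Prod>c\<in>C. g c i) = (\<Prod>c\<in>C. \<Sum>i\<in>PiE c A. g c i)"
  using assms
proof (induction C rule: finite_induct)
  case empty
  then show ?case by simp
next
  case (insert c0 C)
  let ?U = "\<Union>C"
  have disj: "c0 \<inter> ?U = {}"
  proof -
    have "c0 \<inter> c = {}" if "c \<in> C" for c using insert.prems(2) insert.hyps(2) that by auto
    then show ?thesis by auto
  qed
  have finU: "finite ?U" using insert.prems(1) insert.hyps(1) by auto
  have fin: "finite (PiE c0 A)" "finite (PiE ?U A)"
    using insert.prems(1,3) finU by (auto intro!: finite_PiE)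
  have loc: "\<forall>c\<in>insert c0 C. \<forall>i i'. (\<forall>n\<in>c. i n = i' n) \<longrightarrow> g c i = g c i'"
    using insert.prems(4) by blast
  have "(\<Sum>i\<in>PiE (\<Union>(insert c0 C)) A. \<Prod>c\<in>insert c0 C. g c i)
      = (\<Sum>i\<in>PiE (c0 \<union> ?U) A. g c0 i * (\<Prod>c\<in>C. g c i))"
    using insert.hyps by simp
  also have "\<dots> = (\<Sum>p\<in>PiE c0 A \<times> PiE ?U A.
      g c0 (\<lambda>n. if n \<in> c0 then fst p n else snd p n) * (\<Prod>c\<in>C. g c (\<lambda>n. if n \<in> c0 then fst p n else snd p n)))"
    by (rule PiE_split_sum[OF disj])
  also have "\<dots> = (\<Sum>p\<in>PiE c0 A \<times> PiE ?U A. g c0 (fst p) * (\<Prod>c\<in>C. g c (snd p)))"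
  proof (rule sum.cong[OF refl])
    fix p assume "p \<in> PiE c0 A \<times> PiE ?U A"
    have e1: "g c0 (\<lambda>n. if n \<in> c0 then fst p n else snd p n) = g c0 (fst p)"
      by (rule loc[rule_format]) auto
    have e2: "g c (\<lambda>n. if n \<in> c0 then fst p n else snd p n) = g c (snd p)" if "c \<in> C" for c
    proof -
      have "\<forall>n\<in>c. (if n \<in> c0 then fst p n else snd p n) = snd p n" using that disj by auto
      then show ?thesis using that by (intro loc[rule_format]) auto
    qed
    show "g c0 (\<lambda>n. if n \<in> c0 then fst p n else snd p n) * (\<Prod>c\<in>C. g c (\<lambda>n. if n \<in> c0 then fst p n else snd p n))
        = g c0 (fst p) * (\<Prod>c\<in>C. g c (snd p))"
      using e1 e2 by simp
  qed
  also have "\<dots> = (\<Sum>f\<in>PiE c0 A. g c0 f) * (\<Sum>h\<in>PiE ?U A. \<Prod>c\<in>C. g c h)"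
    by (simp add: sum_product sum.cartesian_product split_beta)
  also have "(\<Sum>h\<in>PiE ?U A. \<Prod>c\<in>C. g c h) = (\<Prod>c\<in>C. \<Sum>i\<in>PiE c A. g c i)"
  proof (rule insert.IH)
    show "\<forall>c\<in>C. finite c" "\<forall>n. finite (A n)" using insert.prems by auto
    show "\<forall>c1\<in>C. \<forall>c2\<in>C. c1 \<noteq> c2 \<longrightarrow> c1 \<inter> c2 = {}" using insert.prems(2) by blast
    show "\<forall>c\<in>C. \<forall>i i'. (\<forall>n\<in>c. i n = i' n) \<longrightarrow> g c i = g c i'" using loc by blast
  qed
  finally show ?case using insert.hyps by simp
qed

lemma sum_PiE_single:
  fixes F :: "'b \<Rightarrow> real"
  shows "(\<Sum>i\<in>PiE {x} A. F (i x)) = (\<Sum>y\<in>A x. F y)"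
proof (rule sum.reindex_bij_witness[of _ "\<lambda>y n. if n = x then y else undefined" "\<lambda>i. i x"])
  fix a assume a: "a \<in> PiE {x} A"
  show "(\<lambda>n. if n = x then a x else undefined) = a"
  proof
    fix n show "(if n = x then a x else undefined) = a n"
      using a by (cases "n = x") (auto simp: PiE_def extensional_def)
  qed
  show "a x \<in> A x" using a by auto
  show "F (a x) = F (a x)" by simp
next
  fix b assume b: "b \<in> A x"
  show "(if x = x then b else undefined) = b" by simp
  show "(\<lambda>n. if n = x then b else undefined) \<in> PiE {x} A"
    using b by (auto simp: PiE_def extensional_def)
qed

lemma sum_prod_le_prod_sum:
  fixes X :: "'c \<Rightarrow> 'a \<Rightarrow> real"
  assumes "finite C" "C \<noteq> {}" "finite A" "\<forall>c a. 0 \<le> X c a"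
  shows "(\<Sum>a\<in>A. \<Prod>c\<in>C. X c a) \<le> (\<Prod>c\<in>C. \<Sum>a\<in>A. X c a)"
proof -
  obtain c0 where c0: "c0 \<in> C" using assms(2) by blast
  let ?Q = "\<Prod>c\<in>C - {c0}. \<Sum>a\<in>A. X c a"
  have "(\<Sum>a\<in>A. \<Prod>c\<in>C. X c a) = (\<Sum>a\<in>A. X c0 a * (\<Prod>c\<in>C - {c0}. X c a))"
    by (intro sum.cong refl prod.remove[OF assms(1) c0])
  also have "\<dots> \<le> (\<Sum>a\<in>A. X c0 a * ?Q)"
  proof (rule sum_mono)
    fix a assume a: "a \<in> A"
    have "(\<Prod>c\<in>C - {c0}. X c a) \<le> ?Q"
    proof (rule prod_mono)
      fix c assume "c \<in> C - {c0}"
      show "0 \<le> X c a \<and> X c a \<le> (\<Sum>a\<in>A. X c a)"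
        using assms(3,4) a by (auto intro: member_le_sum)
    qed
    then show "X c0 a * (\<Prod>c\<in>C - {c0}. X c a) \<le> X c0 a * ?Q"
      using assms(4) by (intro mult_left_mono) auto
  qed
  also have "\<dots> = (\<Sum>a\<in>A. X c0 a) * ?Q" by (simp add: sum_distrib_right)
  also have "\<dots> = (\<Prod>c\<in>C. \<Sum>a\<in>A. X c a)"
    using prod.remove[OF assms(1) c0, of "\<lambda>c. \<Sum>a\<in>A. X c a"] by simp
  finally show ?thesis .
qed

definition nrm2 :: "(nat \<Rightarrow> nat) \<Rightarrow> nat set \<Rightarrow> ((nat \<Rightarrow> nat) \<Rightarrow> real) \<Rightarrow> real" where
  "nrm2 D \<mu> f = (\<Sum>i\<in>PiE \<mu> (\<lambda>n. {..<D n}). (f i)\<^sup>2)"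

lemma nrm2_nonneg: "0 \<le> nrm2 D \<mu> f"
  unfolding nrm2_def by (simp add: sum_nonneg)

lemma step:
  assumes mt: "mode_tree N T" and mu: "\<mu> \<in> T" "\<not> is_singleton \<mu>"
  shows "nrm2 D \<mu> (ht (Suc k) T R V \<mu> b)
     \<le> (\<Sum>a<R \<mu>. (V \<mu> a b)\<^sup>2) * (\<Prod>c\<in>children T \<mu>. \<Sum>a<R \<mu>. nrm2 D c (ht k T R V c a))"
proof -
  let ?C = "children T \<mu>"
  let ?A = "\<lambda>n. {..<D n}"
  let ?P = "\<lambda>a i. \<Prod>c\<in>?C. ht k T R V c a i"
  have ht_eq: "ht (Suc k) T R V \<mu> b i = (\<Sum>a<R \<mu>. V \<mu> a b * ?P a i)" for i
    using mu(2) by simp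
  have finC: "finite ?C" using ch_finite[OF mt] .
  have Cne: "?C \<noteq> {}" using ch_nonempty[OF mt mu] .
  have Cun: "\<Union>?C = \<mu>" using ch_union[OF mt mu] .
  have fact: "(\<Sum>i\<in>PiE \<mu> ?A. (?P a i)\<^sup>2) = (\<Prod>c\<in>?C. nrm2 D c (ht k T R V c a))" for a
  proof -
    have "(\<Sum>i\<in>PiE \<mu> ?A. (?P a i)\<^sup>2) = (\<Sum>i\<in>PiE (\<Union>?C) ?A. \<Prod>c\<in>?C. (ht k T R V c a i)\<^sup>2)"
      unfolding Cun by (simp add: prod_power_distrib)
    also have "\<dots> = (\<Prod>c\<in>?C. \<Sum>i\<in>PiE c ?A. (ht k T R V c a i)\<^sup>2)"
    proof (rule sum_PiE_prod_disj[where g = "\<lambda>c i. (ht k T R V c a i)\<^sup>2"])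
      show "finite ?C" by (rule finC)
      show "\<forall>c\<in>?C. finite c" using ch_in mt_elem[OF mt] by blast
      show "\<forall>c1\<in>?C. \<forall>c2\<in>?C. c1 \<noteq> c2 \<longrightarrow> c1 \<inter> c2 = {}" using ch_disj[OF mt] by blast
      show "\<forall>n. finite (?A n)" by simp
      show "\<forall>c\<in>?C. \<forall>i i'. (\<forall>n\<in>c. i n = i' n) \<longrightarrow> (ht k T R V c a i)\<^sup>2 = (ht k T R V c a i')\<^sup>2"
        using ht_loc by metis
    qed
    finally show ?thesis unfolding nrm2_def .
  qed
  have "nrm2 D \<mu> (ht (Suc k) T R V \<mu> b) = (\<Sum>i\<in>PiE \<mu> ?A. (\<Sum>a<R \<mu>. V \<mu> a b * ?P a i)\<^sup>2)"
    unfolding nrm2_def ht_eq ..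
  also have "\<dots> \<le> (\<Sum>i\<in>PiE \<mu> ?A. (\<Sum>a<R \<mu>. (V \<mu> a b)\<^sup>2) * (\<Sum>a<R \<mu>. (?P a i)\<^sup>2))"
    by (rule sum_mono) (rule Cauchy_Schwarz_ineq_sum)
  also have "\<dots> = (\<Sum>a<R \<mu>. (V \<mu> a b)\<^sup>2) * (\<Sum>a<R \<mu>. \<Sum>i\<in>PiE \<mu> ?A. (?P a i)\<^sup>2)"
    by (simp add: sum_distrib_left sum.swap[of _ "PiE \<mu> ?A"])
  also have "\<dots> = (\<Sum>a<R \<mu>. (V \<mu> a b)\<^sup>2) * (\<Sum>a<R \<mu>. \<Prod>c\<in>?C. nrm2 D c (ht k T R V c a))"
    by (simp add: fact)
  also have "\<dots> \<le> (\<Sum>a<R \<mu>. (V \<mu> a b)\<^sup>2) * (\<Prod>c\<in>?C. \<Sum>a<R \<mu>. nrm2 D c (ht k T R V c a))"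
    by (intro mult_left_mono sum_prod_le_prod_sum finC Cne) (auto simp: nrm2_nonneg sum_nonneg)
  finally show ?thesis .
qed

lemma gen:
  assumes mt: "mode_tree N T"
  shows "\<mu> \<in> T \<Longrightarrow> card \<mu> \<le> k \<Longrightarrow> nrm2 D \<mu> (ht k T R V \<mu> b)
     \<le> (\<Sum>a<rows D R \<mu>. (V \<mu> a b)\<^sup>2) * (\<Prod>\<sigma>\<in>subt T \<mu> - {\<mu>}. (mat_norm N T D R V \<sigma>)\<^sup>2)"
proof (induction k arbitrary: \<mu> b)
  case 0
  have "finite \<mu>" "\<mu> \<noteq> {}" using mt_elem[OF mt 0(1)] by auto
  then have "card \<mu> > 0" by (simp add: card_gt_0_iff)
  then show ?case using 0(2) by simp
next
  case (Suc k)
  note mu = Suc.prems(1)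
  show ?case
  proof (cases "is_singleton \<mu>")
    case True
    then obtain x where x: "\<mu> = {x}" unfolding is_singleton_def by auto
    have "nrm2 D \<mu> (ht (Suc k) T R V \<mu> b) = (\<Sum>i\<in>PiE {x} (\<lambda>n. {..<D n}). (V \<mu> (i x) b)\<^sup>2)"
      unfolding nrm2_def using x by simp
    also have "\<dots> = (\<Sum>y<D x. (V \<mu> y b)\<^sup>2)"
      by (rule sum_PiE_single)
    also have "\<dots> = (\<Sum>a<rows D R \<mu>. (V \<mu> a b)\<^sup>2)"
      using x by (simp add: rows_def)
    also have "\<dots> = (\<Sum>a<rows D R \<mu>. (V \<mu> a b)\<^sup>2) * (\<Prod>\<sigma>\<in>subt T \<mu> - {\<mu>}. (mat_norm N T D R V \<sigma>)\<^sup>2)"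
      unfolding subt_leaf[OF mt mu True] by simp
    finally show ?thesis by (rule eq_refl)
  next
    case False
    let ?C = "children T \<mu>"
    let ?M = "\<lambda>\<sigma>. (mat_norm N T D R V \<sigma>)\<^sup>2"
    have finC: "finite ?C" using ch_finite[OF mt] .
    have fmu: "finite \<mu>" using mt_elem[OF mt mu] by simp
    have bound: "(\<Sum>a<R \<mu>. nrm2 D c (ht k T R V c a)) \<le> (\<Prod>\<sigma>\<in>subt T c. ?M \<sigma>)"
      if c: "c \<in> ?C" for c
    proof -
      have cT: "c \<in> T" and cs: "c \<subset> \<mu>" using ch_in[OF c] by auto
      have "card c < card \<mu>" using psubset_card_mono[OF fmu cs] .
      then have ck: "card c \<le> k" using Suc.prems(2) by simp
      let ?Pc = "\<Prod>\<sigma>\<in>subt T c - {c}. ?M \<sigma>"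
      have "(\<Sum>a<R \<mu>. nrm2 D c (ht k T R V c a)) \<le> (\<Sum>a<R \<mu>. (\<Sum>a'<rows D R c. (V c a' a)\<^sup>2) * ?Pc)"
        by (rule sum_mono) (rule Suc.IH[OF cT ck])
      also have "\<dots> = (\<Sum>a<R \<mu>. \<Sum>a'<rows D R c. (V c a' a)\<^sup>2) * ?Pc"
        by (simp add: sum_distrib_right)
      also have "(\<Sum>a<R \<mu>. \<Sum>a'<rows D R c. (V c a' a)\<^sup>2) = ?M c"
      proof -
        have "cols N T D R c = R \<mu>" using cols_ch[OF mt mu False c] .
        then have "(\<Sum>a<R \<mu>. \<Sum>a'<rows D R c. (V c a' a)\<^sup>2)
              = (\<Sum>a'<rows D R c. \<Sum>b'<cols N T D R c. (V c a' b')\<^sup>2)"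
          by (simp add: sum.swap[of _ "{..<R \<mu>}"])
        also have "\<dots> = ?M c"
          unfolding mat_norm_def by (simp add: sum_nonneg)
        finally show ?thesis .
      qed
      also have "?M c * ?Pc = (\<Prod>\<sigma>\<in>subt T c. ?M \<sigma>)"
      proof -
        have "subt T c = insert c (subt T c - {c})" using cT unfolding subt_def by auto
        moreover have "finite (subt T c - {c})" using subt_finite[OF mt] by simp
        ultimately show ?thesis by (metis prod.insert Diff_iff insertI1)
      qed
      finally show ?thesis .
    qed
    have "nrm2 D \<mu> (ht (Suc k) T R V \<mu> b)
        \<le> (\<Sum>a<R \<mu>. (V \<mu> a b)\<^sup>2) * (\<Prod>c\<in>?C. \<Sum>a<R \<mu>. nrm2 D c (ht k T R V c a))"
      by (rule step[OF mt mu False])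
    also have "\<dots> \<le> (\<Sum>a<R \<mu>. (V \<mu> a b)\<^sup>2) * (\<Prod>c\<in>?C. \<Prod>\<sigma>\<in>subt T c. ?M \<sigma>)"
      by (intro mult_left_mono prod_mono) (auto simp: bound sum_nonneg nrm2_nonneg)
    also have "(\<Prod>c\<in>?C. \<Prod>\<sigma>\<in>subt T c. ?M \<sigma>) = (\<Prod>\<sigma>\<in>(\<Union>c\<in>?C. subt T c). ?M \<sigma>)"
      by (rule prod.UNION_disjoint[symmetric]) (auto simp: finC subt_finite[OF mt] subt_disj[OF mt])
    also have "(\<Union>c\<in>?C. subt T c) = subt T \<mu> - {\<mu>}"
      using subt_decomp[OF mt mu False] by simp
    finally show ?thesis using False by (simp add: rows_def)
  qed
qed

definition wd :: "nat set set \<Rightarrow> (nat set \<Rightarrow> nat \<Rightarrow> nat \<Rightarrow> real) \<Rightarrow> nat set \<Rightarrow> nat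
             \<Rightarrow> (nat set \<Rightarrow> nat \<Rightarrow> nat \<Rightarrow> real)" where
  "wd T W \<nu> r = (\<lambda>\<mu> a b. if \<mu> = \<nu> then (if a = r then W \<mu> a b else 0)
      else if \<mu> \<in> children T \<nu> then (if b = r then W \<mu> a b else 0) else W \<mu> a b)"

lemma diff:
  assumes mt: "mode_tree N T" and nu: "\<nu> \<in> T" "\<not> is_singleton \<nu>" and r: "r < R \<nu>"
  shows "\<mu> \<in> T \<Longrightarrow> \<nu> \<subseteq> \<mu> \<Longrightarrow>
    ht k T R W \<mu> b i - ht k T R (zero_component T W \<nu> r) \<mu> b i = ht k T R (wd T W \<nu> r) \<mu> b i"
proof (induction k arbitrary: \<mu> b)
  case 0
  then show ?case by simp
next
  case (Suc k)
  let ?W' = "zero_component T W \<nu> r"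
  let ?Wd = "wd T W \<nu> r"
  let ?C = "children T \<nu>"
  have nne: "\<nu> \<noteq> {}" using mt_elem[OF mt nu(1)] by simp
  have nc: "\<nu> \<notin> ?C" using ch_in[of \<nu> T \<nu>] by auto
  have below: "\<rho> \<noteq> \<nu> \<and> \<rho> \<notin> ?C" if "\<rho> \<in> T" "\<rho> \<subset> c" "c \<in> ?C" for \<rho> c
  proof -
    have "c \<in> T" "c \<subset> \<nu>" using ch_in[OF that(3)] by auto
    then show ?thesis using that ch_max[of \<rho> T \<nu> c] by auto
  qed
  have disjn: "\<rho> \<noteq> \<nu> \<and> \<rho> \<notin> ?C" if "\<rho> \<in> T" "\<rho> \<inter> \<nu> = {}" for \<rho>
  proof -
    have "\<rho> \<noteq> {}" using mt_elem[OF mt that(1)] by simp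
    then show ?thesis using that nne ch_in[of \<rho> T \<nu>] by auto
  qed
  have mu_ns: "\<not> is_singleton \<mu>"
  proof
    assume "is_singleton \<mu>"
    then obtain x where "\<mu> = {x}" unfolding is_singleton_def by auto
    then have "\<nu> = \<mu>" using Suc.prems(2) nne by auto
    then show False using nu(2) \<open>is_singleton \<mu>\<close> by simp
  qed
  show ?case
  proof (cases "\<mu> = \<nu>")
    case True
    have W'nu: "?W' \<nu> a b = (if a = r then 0 else W \<nu> a b)" for a
      using nc unfolding zero_component_def by auto
    have Wdnu: "?Wd \<nu> a b = (if a = r then W \<nu> a b else 0)" for a
      unfolding wd_def by auto
    have chW': "ht k T R ?W' c a i = ht k T R W c a i" if "c \<in> ?C" "a \<noteq> r" for c a
    proof (rule ht_cong2[symmetric])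
      show "c \<in> T" using ch_in[OF that(1)] by simp
      show "\<forall>a'. W c a' a = ?W' c a' a" using that nc unfolding zero_component_def by auto
      show "\<forall>\<rho>\<in>T. \<rho> \<subset> c \<longrightarrow> W \<rho> = ?W' \<rho>"
      proof (intro ballI impI)
        fix \<rho> assume "\<rho> \<in> T" "\<rho> \<subset> c"
        then have "\<rho> \<noteq> \<nu>" "\<rho> \<notin> ?C" using below[OF _ _ that(1)] by auto
        then show "W \<rho> = ?W' \<rho>" unfolding zero_component_def by (simp add: fun_eq_iff)
      qed
    qed
    have chWd: "ht k T R ?Wd c r i = ht k T R W c r i" if "c \<in> ?C" for c
    proof (rule ht_cong2[symmetric])
      show "c \<in> T" using ch_in[OF that(1)] by simp
      show "\<forall>a'. W c a' r = ?Wd c a' r" using that nc unfolding wd_def by auto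
      show "\<forall>\<rho>\<in>T. \<rho> \<subset> c \<longrightarrow> W \<rho> = ?Wd \<rho>"
      proof (intro ballI impI)
        fix \<rho> assume "\<rho> \<in> T" "\<rho> \<subset> c"
        then have "\<rho> \<noteq> \<nu>" "\<rho> \<notin> ?C" using below[OF _ _ that(1)] by auto
        then show "W \<rho> = ?Wd \<rho>" unfolding wd_def by (simp add: fun_eq_iff)
      qed
    qed
    have "ht (Suc k) T R W \<nu> b i - ht (Suc k) T R ?W' \<nu> b i
        = (\<Sum>a<R \<nu>. W \<nu> a b * (\<Prod>c\<in>?C. ht k T R W c a i) - ?W' \<nu> a b * (\<Prod>c\<in>?C. ht k T R ?W' c a i))"
      using nu(2) by (simp add: sum_subtractf)
    also have "\<dots> = (\<Sum>a<R \<nu>. if a = r then W \<nu> r b * (\<Prod>c\<in>?C. ht k T R W c r i) else 0)"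
    proof (rule sum.cong[OF refl])
      fix a assume "a \<in> {..<R \<nu>}"
      show "W \<nu> a b * (\<Prod>c\<in>?C. ht k T R W c a i) - ?W' \<nu> a b * (\<Prod>c\<in>?C. ht k T R ?W' c a i)
          = (if a = r then W \<nu> r b * (\<Prod>c\<in>?C. ht k T R W c r i) else 0)"
        using chW' by (cases "a = r") (auto simp: W'nu intro!: prod.cong)
    qed
    also have "\<dots> = W \<nu> r b * (\<Prod>c\<in>?C. ht k T R W c r i)"
      using r by (simp add: sum.delta)
    also have "\<dots> = (\<Sum>a<R \<nu>. if a = r then W \<nu> r b * (\<Prod>c\<in>?C. ht k T R ?Wd c r i) else 0)"
      using r chWd by (simp add: sum.delta)
    also have "\<dots> = ht (Suc k) T R ?Wd \<nu> b i"
    proof -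
      have "(\<Sum>a<R \<nu>. if a = r then W \<nu> r b * (\<Prod>c\<in>?C. ht k T R ?Wd c r i) else 0)
          = (\<Sum>a<R \<nu>. ?Wd \<nu> a b * (\<Prod>c\<in>?C. ht k T R ?Wd c a i))"
        by (rule sum.cong[OF refl]) (simp add: Wdnu)
      then show ?thesis using nu(2) by simp
    qed
    finally show ?thesis using True by simp
  next
    case False
    then have nsub: "\<nu> \<subset> \<mu>" using Suc.prems(2) by auto
    let ?D = "children T \<mu>"
    obtain c0 where c0: "c0 \<in> ?D" "\<nu> \<subseteq> c0" using ch_below[OF mt nu(1) nsub] by blast
    have c0T: "c0 \<in> T" using ch_in[OF c0(1)] by simp
    have finD: "finite ?D" using ch_finite[OF mt] .
    have oth: "ht k T R ?W' c a i = ht k T R W c a i \<and> ht k T R ?Wd c a i = ht k T R W c a i"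
      if "c \<in> ?D - {c0}" for c a
    proof -
      have cT: "c \<in> T" using ch_in that by auto
      have "c \<inter> c0 = {}" using ch_disj[OF mt, of c \<mu> c0] that c0(1) by auto
      then have cd: "\<rho> \<inter> \<nu> = {}" if "\<rho> \<subseteq> c" for \<rho> using c0(2) that by auto
      have a1: "W \<rho> = ?W' \<rho>" if "\<rho> \<in> T" "\<rho> \<subseteq> c" for \<rho>
      proof -
        have "\<rho> \<noteq> \<nu>" "\<rho> \<notin> ?C" using disjn[OF that(1) cd[OF that(2)]] by auto
        then show ?thesis unfolding zero_component_def by (simp add: fun_eq_iff)
      qed
      have a2: "W \<rho> = ?Wd \<rho>" if "\<rho> \<in> T" "\<rho> \<subseteq> c" for \<rho>
      proof -
        have "\<rho> \<noteq> \<nu>" "\<rho> \<notin> ?C" using disjn[OF that(1) cd[OF that(2)]] by auto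
        then show ?thesis unfolding wd_def by (simp add: fun_eq_iff)
      qed
      have "ht k T R W c a i = ht k T R ?W' c a i" by (rule ht_cong1[OF cT]) (simp add: a1)
      moreover have "ht k T R W c a i = ht k T R ?Wd c a i" by (rule ht_cong1[OF cT]) (simp add: a2)
      ultimately show ?thesis by simp
    qed
    have muC: "\<mu> \<notin> ?C" using ch_in[of \<mu> T \<nu>] nsub by auto
    have W'mu: "?W' \<mu> = W \<mu>" using False muC unfolding zero_component_def by (auto simp: fun_eq_iff)
    have Wdmu: "?Wd \<mu> = W \<mu>" using False muC unfolding wd_def by (auto simp: fun_eq_iff)
    have IH: "ht k T R W c0 a i - ht k T R ?W' c0 a i = ht k T R ?Wd c0 a i" for a
      by (rule Suc.IH[OF c0T c0(2)])
    have pr: "(\<Prod>c\<in>?D. f c) = f c0 * (\<Prod>c\<in>?D - {c0}. f c)" for f :: "nat set \<Rightarrow> real"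
      using prod.remove[OF finD c0(1)] .
    have "ht (Suc k) T R W \<mu> b i - ht (Suc k) T R ?W' \<mu> b i
        = (\<Sum>a<R \<mu>. W \<mu> a b * ((\<Prod>c\<in>?D. ht k T R W c a i) - (\<Prod>c\<in>?D. ht k T R ?W' c a i)))"
      using mu_ns W'mu by (simp add: sum_subtractf right_diff_distrib)
    also have "\<dots> = (\<Sum>a<R \<mu>. W \<mu> a b * (\<Prod>c\<in>?D. ht k T R ?Wd c a i))"
    proof (rule sum.cong[OF refl])
      fix a
      have e1: "(\<Prod>c\<in>?D - {c0}. ht k T R ?W' c a i) = (\<Prod>c\<in>?D - {c0}. ht k T R W c a i)"
        using oth by (intro prod.cong) auto
      have e2: "(\<Prod>c\<in>?D - {c0}. ht k T R ?Wd c a i) = (\<Prod>c\<in>?D - {c0}. ht k T R W c a i)"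
        using oth by (intro prod.cong) auto
      have "(\<Prod>c\<in>?D. ht k T R W c a i) - (\<Prod>c\<in>?D. ht k T R ?W' c a i)
          = (ht k T R W c0 a i - ht k T R ?W' c0 a i) * (\<Prod>c\<in>?D - {c0}. ht k T R W c a i)"
        unfolding pr e1 by (simp add: left_diff_distrib)
      also have "\<dots> = (\<Prod>c\<in>?D. ht k T R ?Wd c a i)"
        unfolding pr e2 IH ..
      finally show "W \<mu> a b * ((\<Prod>c\<in>?D. ht k T R W c a i) - (\<Prod>c\<in>?D. ht k T R ?W' c a i))
          = W \<mu> a b * (\<Prod>c\<in>?D. ht k T R ?Wd c a i)" by simp
    qed
    also have "\<dots> = ht (Suc k) T R ?Wd \<mu> b i"
      using mu_ns Wdmu by simp
    finally show ?thesis .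
  qed
qed

theorem lemma15:
  fixes N :: nat and D :: "nat \<Rightarrow> nat" and T :: "nat set set"
    and R :: "nat set \<Rightarrow> nat" and W :: "nat set \<Rightarrow> nat \<Rightarrow> nat \<Rightarrow> real"
    and \<nu> :: "nat set" and r :: nat
  assumes "N \<ge> 1"
    and "\<forall>n\<in>{1..N}. D n \<ge> 1"
    and "mode_tree N T"
    and "\<forall>\<mu>. interior T \<mu> \<longrightarrow> R \<mu> \<ge> 1"
    and "interior T \<nu>"
    and "r < R \<nu>"
  shows "tensor_norm N D (\<lambda>i. end_tensor N T R W i
                              - end_tensor N T R (zero_component T W \<nu> r) i)
         \<le> local_norm N T D R W \<nu> r *
            (\<Prod>\<nu>'\<in>T - ({\<nu>} \<union> children T \<nu>). mat_norm N T D R W \<nu>')"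
proof -
  note mt = assms(3)
  have nu: "\<nu> \<in> T" "\<not> is_singleton \<nu>" using assms(5) unfolding interior_def by auto
  note r = assms(6)
  define root where "root = {1..N::nat}"
  define K where "K = card root"
  define Wd where "Wd = wd T W \<nu> r"
  let ?C = "children T \<nu>"
  let ?M = "\<lambda>\<sigma>. mat_norm N T D R Wd \<sigma>"
  have rootT: "root \<in> T" using mt unfolding mode_tree_def root_def by auto
  have nroot: "\<nu> \<subseteq> root" using mt_elem[OF mt nu(1)] unfolding root_def by auto
  have finT: "finite T" using mt_finite[OF mt] .
  have finC: "finite ?C" using ch_finite[OF mt] .
  have CT: "?C \<subseteq> T" using ch_in by blast
  have nc: "\<nu> \<notin> ?C" using ch_in[of \<nu> T \<nu>] by auto
  have eq: "end_tensor N T R W i - end_tensor N T R (zero_component T W \<nu> r) i = ht K T R Wd root 0 i" for i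
    unfolding end_tensor_def inter_tensor_def K_def Wd_def root_def[symmetric]
    by (rule diff[where R=R, OF mt nu r rootT nroot])
  have tn: "tensor_norm N D (\<lambda>i. end_tensor N T R W i - end_tensor N T R (zero_component T W \<nu> r) i)
      = sqrt (nrm2 D root (ht K T R Wd root 0))"
    unfolding tensor_norm_def nrm2_def eq root_def ..
  have g: "nrm2 D root (ht K T R Wd root 0)
      \<le> (\<Sum>a<rows D R root. (Wd root a 0)\<^sup>2) * (\<Prod>\<sigma>\<in>subt T root - {root}. (?M \<sigma>)\<^sup>2)"
    by (rule gen[OF mt rootT]) (simp add: K_def)
  have "(\<Sum>a<rows D R root. (Wd root a 0)\<^sup>2) = (?M root)\<^sup>2"
    unfolding mat_norm_def by (simp add: cols_def root_def sum_nonneg)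
  moreover have "subt T root = T" using mt_elem[OF mt] unfolding subt_def root_def by auto
  ultimately have "(\<Sum>a<rows D R root. (Wd root a 0)\<^sup>2) * (\<Prod>\<sigma>\<in>subt T root - {root}. (?M \<sigma>)\<^sup>2)
      = (\<Prod>\<sigma>\<in>T. (?M \<sigma>)\<^sup>2)"
    using prod.remove[OF finT rootT, of "\<lambda>\<sigma>. (?M \<sigma>)\<^sup>2"] by simp
  also have "\<dots> = (\<Prod>\<sigma>\<in>T. ?M \<sigma>)\<^sup>2" by (simp add: prod_power_distrib)
  finally have g2: "nrm2 D root (ht K T R Wd root 0) \<le> (\<Prod>\<sigma>\<in>T. ?M \<sigma>)\<^sup>2" using g by simp
  have Mnn: "0 \<le> (\<Prod>\<sigma>\<in>T. ?M \<sigma>)" unfolding mat_norm_def by (intro prod_nonneg ballI real_sqrt_ge_zero sum_nonneg) simp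
  have s: "sqrt (nrm2 D root (ht K T R Wd root 0)) \<le> (\<Prod>\<sigma>\<in>T. ?M \<sigma>)"
    using real_sqrt_le_mono[OF g2] Mnn by simp
  have split: "(\<Prod>\<sigma>\<in>T. ?M \<sigma>) = (\<Prod>\<sigma>\<in>T - insert \<nu> ?C. ?M \<sigma>) * (?M \<nu> * (\<Prod>c\<in>?C. ?M c))"
  proof -
    have "insert \<nu> ?C \<subseteq> T" using nu(1) CT by auto
    then have "(\<Prod>\<sigma>\<in>T. ?M \<sigma>) = (\<Prod>\<sigma>\<in>T - insert \<nu> ?C. ?M \<sigma>) * (\<Prod>\<sigma>\<in>insert \<nu> ?C. ?M \<sigma>)"
      using prod.subset_diff finT by blast
    also have "(\<Prod>\<sigma>\<in>insert \<nu> ?C. ?M \<sigma>) = ?M \<nu> * (\<Prod>c\<in>?C. ?M c)"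
      using finC nc by simp
    finally show ?thesis .
  qed
  have Mnu: "?M \<nu> = row_norm N T D R W \<nu> r"
  proof -
    have "(\<Sum>a<rows D R \<nu>. \<Sum>b<cols N T D R \<nu>. (Wd \<nu> a b)\<^sup>2)
        = (\<Sum>a<rows D R \<nu>. if a = r then (\<Sum>b<cols N T D R \<nu>. (W \<nu> r b)\<^sup>2) else 0)"
      by (rule sum.cong[OF refl]) (simp add: Wd_def wd_def)
    also have "\<dots> = (\<Sum>b<cols N T D R \<nu>. (W \<nu> r b)\<^sup>2)"
      using r nu(2) by (simp add: sum.delta rows_def)
    finally show ?thesis unfolding mat_norm_def row_norm_def by simp
  qed
  have Mc: "?M c = col_norm D R W c r" if c: "c \<in> ?C" for c
  proof -
    have cne: "c \<noteq> \<nu>" using c nc by auto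
    have cols: "cols N T D R c = R \<nu>" using cols_ch[OF mt nu c] .
    have "(\<Sum>a<rows D R c. \<Sum>b<cols N T D R c. (Wd c a b)\<^sup>2)
        = (\<Sum>a<rows D R c. \<Sum>b<cols N T D R c. if b = r then (W c a r)\<^sup>2 else 0)"
      using c cne by (intro sum.cong refl) (simp add: Wd_def wd_def)
    also have "\<dots> = (\<Sum>a<rows D R c. (W c a r)\<^sup>2)"
      using r cols by (simp add: sum.delta)
    finally show ?thesis unfolding mat_norm_def col_norm_def by simp
  qed
  have Mrest: "?M \<sigma> = mat_norm N T D R W \<sigma>" if "\<sigma> \<in> T - insert \<nu> ?C" for \<sigma>
  proof -
    have "\<sigma> \<noteq> \<nu>" "\<sigma> \<notin> ?C" using that by auto
    then have "Wd \<sigma> = W \<sigma>" unfolding Wd_def wd_def by (simp add: fun_eq_iff)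
    then show ?thesis unfolding mat_norm_def by simp
  qed
  have "(\<Prod>\<sigma>\<in>T. ?M \<sigma>) = local_norm N T D R W \<nu> r * (\<Prod>\<nu>'\<in>T - ({\<nu>} \<union> ?C). mat_norm N T D R W \<nu>')"
  proof -
    have p1: "(\<Prod>c\<in>?C. ?M c) = (\<Prod>c\<in>?C. col_norm D R W c r)"
      by (rule prod.cong[OF refl]) (rule Mc)
    have p2: "(\<Prod>\<sigma>\<in>T - insert \<nu> ?C. ?M \<sigma>) = (\<Prod>\<sigma>\<in>T - insert \<nu> ?C. mat_norm N T D R W \<sigma>)"
      by (rule prod.cong[OF refl]) (rule Mrest)
    have se: "T - ({\<nu>} \<union> ?C) = T - insert \<nu> ?C" by simp
    show ?thesis unfolding split local_norm_def Mnu p1 p2 se by (simp only: mult.commute)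
  qed
  then show ?thesis using tn s by simp
qed

end
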